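(* Let $d=\infty$, $C>0$, and let ${\boldsymbol\gamma}$ be finite-order weights (of some order $\omega\in\mathbb N$) with ${\boldsymbol\gamma}\in\mathcal S_{\infty,C}$. Then $$\mathrm{decay}(T^\uparrow_{\infty,C}{\boldsymbol\gamma})=\mathrm{decay}({\boldsymbol\gamma})\ge1.$$
   Context: $\mathcal U_\infty$ is the set of finite subsets of $\mathbb N$; weights are families $(\gamma_u)_{u\in\mathcal U_\infty}$ of non-negative reals. Finite-order weights of order $\omega\in\mathbb N$: $\gamma_u=0$ whenever $|u|>\omega$. For a family $(a_v)_{v\in V}$ of non-negative reals over a countably infinite index set, $\mathrm{decay}((a_v))=\sup\{\tau>0:\sum_va_v^{1/\tau}<\infty\}$, $\sup\emptyset=0$. For $C>0$: $\mathcal S_{\infty,C}=\{{\boldsymbol\gamma}:\sum_vC^{2|v|}\gamma_v<\infty\}$ and $(T^\uparrow_{\infty,C}{\boldsymbol\gamma})_u=\sum_{v\supseteq u}C^{2|v|}\gamma_v$. *)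

theory Defs
  imports "HOL-Analysis.Analysis"
begin

definition U_inf :: "nat set set" where
  "U_inf = {u. finite u}"

definition decay :: "('a \<Rightarrow> real) \<Rightarrow> 'a set \<Rightarrow> ereal" where
  "decay a V =
     (let S = {\<tau>::real. \<tau> > 0 \<and> (\<lambda>v. a v powr (1 / \<tau>)) summable_on V}
      in if S = {} then 0 else Sup (ereal ` S))"

definition finite_order_weights :: "(nat set \<Rightarrow> real) \<Rightarrow> nat \<Rightarrow> bool" where
  "finite_order_weights \<gamma> \<omega> \<longleftrightarrow>
     (\<forall>u\<in>U_inf. \<gamma> u \<ge> 0) \<and> (\<forall>u\<in>U_inf. card u > \<omega> \<longrightarrow> \<gamma> u = 0)"

definition S_inf :: "real \<Rightarrow> (nat set \<Rightarrow> real) set" where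
  "S_inf C = {\<gamma>. (\<lambda>v. C ^ (2 * card v) * \<gamma> v) summable_on U_inf}"

definition T_up_inf :: "real \<Rightarrow> (nat set \<Rightarrow> real) \<Rightarrow> (nat set \<Rightarrow> real)" where
  "T_up_inf C \<gamma> = (\<lambda>u. \<Sum>\<^sub>\<infinity>v\<in>{v\<in>U_inf. u \<subseteq> v}. C ^ (2 * card v) * \<gamma> v)"

end

theory Submission
  imports Defs
begin

lemma infsum_finite_sum_swap:
  fixes f :: "'i \<Rightarrow> 'a \<Rightarrow> real"
  assumes "finite I" "\<And>i. i \<in> I \<Longrightarrow> f i summable_on A"
  shows "(\<lambda>x. \<Sum>i\<in>I. f i x) summable_on A \<and> infsum (\<lambda>x. \<Sum>i\<in>I. f i x) A = (\<Sum>i\<in>I. infsum (f i) A)"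
  using assms
proof (induction I rule: finite_induct)
  case empty
  then show ?case by simp
next
  case (insert j I)
  have s1: "f j summable_on A" using insert by simp
  have IH: "(\<lambda>x. \<Sum>i\<in>I. f i x) summable_on A \<and> infsum (\<lambda>x. \<Sum>i\<in>I. f i x) A = (\<Sum>i\<in>I. infsum (f i) A)"
    using insert by simp
  have "(\<lambda>x. f j x + (\<Sum>i\<in>I. f i x)) summable_on A" using s1 IH summable_on_add by blast
  moreover have "infsum (\<lambda>x. f j x + (\<Sum>i\<in>I. f i x)) A = infsum (f j) A + infsum (\<lambda>x. \<Sum>i\<in>I. f i x) A"
    using s1 IH infsum_add by blast
  ultimately show ?case using insert IH by simp
qed

lemma powr_ge1_summable:
  fixes a :: "'a \<Rightarrow> real"
  assumes "a summable_on V" "\<And>v. v \<in> V \<Longrightarrow> a v \<ge> 0" "p \<ge> 1"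
  shows "(\<lambda>v. a v powr p) summable_on V"
proof -
  define S where "S = infsum a V"
  have le: "a v \<le> S" if "v \<in> V" for v
  proof -
    have "infsum a {v} \<le> infsum a V"
      by (rule infsum_mono_neutral) (use assms that in auto)
    then show ?thesis by (simp add: S_def)
  qed
  have "(\<lambda>v. S powr (p - 1) * a v) summable_on V"
    using assms(1) by (rule summable_on_cmult_right)
  moreover have "a v powr p \<le> S powr (p - 1) * a v" if "v \<in> V" for v
  proof (cases "a v = 0")
    case True then show ?thesis by simp
  next
    case False
    then have pos: "a v > 0" using assms(2) that by force
    have "a v powr p = a v powr ((p - 1) + 1)" by simp
    also have "\<dots> = a v powr (p - 1) * a v powr 1" by (rule powr_add)
    also have "\<dots> = a v powr (p - 1) * a v" using pos by simp
    also have "\<dots> \<le> S powr (p - 1) * a v"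
      by (rule mult_right_mono) (use assms pos le that in \<open>auto intro: powr_mono2\<close>)
    finally show ?thesis .
  qed
  ultimately show ?thesis
    by (rule summable_on_comparison_test) auto
qed

theorem mainTheorem12:
  fixes C :: real and \<gamma> :: "nat set \<Rightarrow> real" and \<omega> :: nat
  assumes "C > 0"
    and "finite_order_weights \<gamma> \<omega>"
    and "\<gamma> \<in> S_inf C"
  shows "decay (T_up_inf C \<gamma>) U_inf = decay \<gamma> U_inf \<and> decay \<gamma> U_inf \<ge> 1"
proof -
  define U where "U = U_inf"
  define g where "g = \<gamma>"
  define c where "c = (\<lambda>v. C ^ (2 * card v) * g v)"
  define t where "t = T_up_inf C \<gamma>"
  have t_def': "t u = infsum c {v\<in>U. u \<subseteq> v}" for u
    by (simp add: t_def T_up_inf_def c_def U_def g_def)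
  have g_nn: "v \<in> U \<Longrightarrow> g v \<ge> 0" for v
    using assms(2) by (auto simp: finite_order_weights_def U_def g_def)
  have g_zero: "v \<in> U \<Longrightarrow> card v > \<omega> \<Longrightarrow> g v = 0" for v
    using assms(2) by (auto simp: finite_order_weights_def U_def g_def)
  have c_nn: "v \<in> U \<Longrightarrow> c v \<ge> 0" for v
    using g_nn assms(1) by (simp add: c_def)
  have c_sum: "c summable_on U"
    using assms(3) by (simp add: S_inf_def c_def U_def g_def)
  define K where "K = (max 1 C) ^ (2 * \<omega>)"
  have K_pos: "K > 0" by (simp add: K_def)
  have cK: "c v \<le> K * g v" if "v \<in> U" for v
  proof (cases "card v > \<omega>")
    case True then show ?thesis using g_zero that by (simp add: c_def)
  next
    case False
    have "C ^ (2 * card v) \<le> (max 1 C) ^ (2 * card v)"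
      using assms(1) by (intro power_mono) auto
    also have "\<dots> \<le> K" unfolding K_def
      using False by (intro power_increasing) auto
    finally show ?thesis unfolding c_def using g_nn[OF that] by (intro mult_right_mono) auto
  qed
  define L where "L = (max 1 (1 / C)) ^ (2 * \<omega>)"
  have L_pos: "L > 0" by (simp add: L_def)
  have gL: "g v \<le> L * c v" if "v \<in> U" for v
  proof (cases "card v > \<omega>")
    case True then show ?thesis using g_zero that c_nn L_pos by simp
  next
    case False
    have "(1/C) ^ (2 * card v) \<le> (max 1 (1/C)) ^ (2 * card v)"
      using assms(1) by (intro power_mono) auto
    also have "\<dots> \<le> L" unfolding L_def
      using False by (intro power_increasing) auto
    finally have le: "(1/C) ^ (2 * card v) \<le> L" .
    have "g v = (1/C) ^ (2 * card v) * c v"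
      using assms(1) by (simp add: c_def power_one_over field_simps)
    also have "\<dots> \<le> L * c v" using le c_nn[OF that] by (intro mult_right_mono) auto
    finally show ?thesis .
  qed
  have t_nn: "t u \<ge> 0" for u
    unfolding t_def' by (rule infsum_nonneg) (auto intro: c_nn)
  have c_le_t: "c u \<le> t u" if "u \<in> U" for u
  proof -
    have "c summable_on {v\<in>U. u \<subseteq> v}"
      using c_sum by (rule summable_on_subset_banach) auto
    then have "infsum c {u} \<le> infsum c {v\<in>U. u \<subseteq> v}"
      by (intro infsum_mono_neutral) (use that c_nn in auto)
    then show ?thesis by (simp add: t_def')
  qed
  have dirB: "(\<lambda>u. g u powr p) summable_on U" if p: "p > 0" and st: "(\<lambda>u. t u powr p) summable_on U" for p
  proof -
    have "(\<lambda>u. L powr p * t u powr p) summable_on U"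
      using st by (rule summable_on_cmult_right)
    moreover have "g u powr p \<le> L powr p * t u powr p" if "u \<in> U" for u
    proof -
      have "g u powr p \<le> (L * t u) powr p"
        using gL[OF that] c_le_t[OF that] g_nn[OF that] L_pos p
        by (intro powr_mono2) (auto intro: order.trans mult_left_mono)
      also have "\<dots> = L powr p * t u powr p" using L_pos t_nn by (simp add: powr_mult)
      finally show ?thesis .
    qed
    ultimately show ?thesis
      by (rule summable_on_comparison_test) auto
  qed
  have dirA: "(\<lambda>u. t u powr p) summable_on U"
    if p: "p > 0" "p \<le> 1" and sg: "(\<lambda>u. g u powr p) summable_on U" for p
  proof -
    define cp where "cp = (\<lambda>v. c v powr p)"
    have cp_nn: "cp v \<ge> 0" for v by (simp add: cp_def)
    have cpK: "cp v \<le> K powr p * g v powr p" if "v \<in> U" for v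
    proof -
      have "cp v \<le> (K * g v) powr p" unfolding cp_def
        using cK[OF that] c_nn[OF that] p by (intro powr_mono2) auto
      also have "\<dots> = K powr p * g v powr p" using K_pos g_nn[OF that] by (simp add: powr_mult)
      finally show ?thesis .
    qed
    have Kg_sum: "(\<lambda>v. K powr p * g v powr p) summable_on U"
      using sg by (rule summable_on_cmult_right)
    have cp_sum: "cp summable_on U"
      using Kg_sum cpK cp_nn by (rule summable_on_comparison_test) auto
    have cp_zero: "cp v = 0" if "v \<in> U" "card v > \<omega>" for v
      using g_zero[OF that] by (simp add: cp_def c_def)
    define B where "B = (\<lambda>u. infsum cp {v\<in>U. u \<subseteq> v})"
    have tB: "t u powr p \<le> B u" if "u \<in> U" for u
    proof -
      define A where "A = {v\<in>U. u \<subseteq> v}"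
      have AU: "A \<subseteq> U" by (auto simp: A_def)
      have cA: "c summable_on A" using c_sum AU by (rule summable_on_subset_banach)
      have cpA: "cp summable_on A" using cp_sum AU by (rule summable_on_subset_banach)
      have Bdef: "B u = infsum cp A" by (simp add: B_def A_def)
      have B_nn: "B u \<ge> 0" unfolding Bdef by (rule infsum_nonneg) (simp add: cp_nn)
      have cpB: "cp v \<le> B u" if "v \<in> A" for v
      proof -
        have "infsum cp {v} \<le> infsum cp A"
          by (rule infsum_mono_neutral) (use that cpA cp_nn in auto)
        then show ?thesis by (simp add: Bdef)
      qed
      have cle: "c v \<le> cp v * B u powr (1/p - 1)" if "v \<in> A" for v
      proof -
        have cvnn: "c v \<ge> 0" using c_nn that AU by auto
        have "c v = cp v powr (1/p)"
          using cvnn p by (simp add: cp_def powr_powr)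
        also have "\<dots> = cp v * cp v powr (1/p - 1)"
        proof (cases "cp v = 0")
          case True then show ?thesis by simp
        next
          case False
          have "cp v powr (1/p) = cp v powr ((1/p - 1) + 1)" by simp
          also have "\<dots> = cp v powr (1/p - 1) * cp v powr 1" by (rule powr_add)
          also have "\<dots> = cp v * cp v powr (1/p - 1)" using False cp_nn[of v] by simp
          finally show ?thesis .
        qed
        also have "\<dots> \<le> cp v * B u powr (1/p - 1)"
          using cpB[OF that] cp_nn[of v] p by (intro mult_left_mono powr_mono2) auto
        finally show ?thesis .
      qed
      have "t u = infsum c A" by (simp add: t_def' A_def)
      also have "\<dots> \<le> infsum (\<lambda>v. cp v * B u powr (1/p - 1)) A"
        using cA cpA cle by (intro infsum_mono summable_on_cmult_left) auto
      also have "\<dots> = B u * B u powr (1/p - 1)"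
        by (simp add: infsum_cmult_left' Bdef)
      also have "\<dots> = B u powr (1/p)"
      proof (cases "B u = 0")
        case True then show ?thesis by simp
      next
        case False
        have "B u powr (1/p) = B u powr ((1/p - 1) + 1)" by simp
        also have "\<dots> = B u powr (1/p - 1) * B u powr 1" by (rule powr_add)
        also have "\<dots> = B u * B u powr (1/p - 1)" using False B_nn by simp
        finally show ?thesis by simp
      qed
      finally have "t u \<le> B u powr (1/p)" .
      then have "t u powr p \<le> (B u powr (1/p)) powr p"
        using t_nn p by (intro powr_mono2) auto
      also have "\<dots> = B u" using B_nn p by (simp add: powr_powr)
      finally show ?thesis .
    qed
    define M where "M = infsum (\<lambda>v. 2 ^ \<omega> * (K powr p * g v powr p)) U"
    have bound: "(\<Sum>u\<in>F. t u powr p) \<le> M" if F: "finite F" "F \<subseteq> U" for F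
    proof -
      define f where "f = (\<lambda>u v. if u \<subseteq> v then cp v else 0)"
      have f_sum: "f u summable_on U" for u
        using cp_sum by (rule summable_on_comparison_test) (auto simp: f_def cp_nn)
      have Bf: "B u = infsum (f u) U" for u
        unfolding B_def f_def by (rule infsum_cong_neutral) auto
      have "(\<Sum>u\<in>F. t u powr p) \<le> (\<Sum>u\<in>F. B u)"
        using F tB by (intro sum_mono) auto
      also have "\<dots> = infsum (\<lambda>v. \<Sum>u\<in>F. f u v) U"
        using infsum_finite_sum_swap[of F f U] F f_sum by (simp add: Bf)
      also have "\<dots> \<le> M" unfolding M_def
      proof (rule infsum_mono)
        show "(\<lambda>v. \<Sum>u\<in>F. f u v) summable_on U"
          using infsum_finite_sum_swap[of F f U] F f_sum by simp
        show "(\<lambda>v. 2 ^ \<omega> * (K powr p * g v powr p)) summable_on U"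
          using Kg_sum by (rule summable_on_cmult_right)
        fix v assume v: "v \<in> U"
        have fin: "finite v" using v by (simp add: U_def U_inf_def)
        have "(\<Sum>u\<in>F. f u v) = real (card (F \<inter> Pow v)) * cp v"
          unfolding f_def using F(1) by (simp add: sum.If_cases Pow_def Int_def)
        also have "\<dots> \<le> 2 ^ \<omega> * (K powr p * g v powr p)"
        proof (cases "card v > \<omega>")
          case True then show ?thesis using cp_zero[OF v] K_pos by simp
        next
          case False
          have "card (F \<inter> Pow v) \<le> card (Pow v)"
            using fin by (intro card_mono) auto
          also have "\<dots> = 2 ^ card v" using fin by (simp add: card_Pow)
          also have "\<dots> \<le> 2 ^ \<omega>" using False by (intro power_increasing) auto
          finally have "real (card (F \<inter> Pow v)) \<le> 2 ^ \<omega>"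
            by (metis of_nat_le_iff of_nat_numeral of_nat_power)
          then show ?thesis using cpK[OF v] cp_nn[of v]
            by (intro mult_mono) auto
        qed
        finally show "(\<Sum>u\<in>F. f u v) \<le> 2 ^ \<omega> * (K powr p * g v powr p)" .
      qed
      finally show ?thesis .
    qed
    show ?thesis
    proof (rule nonneg_bdd_above_summable_on)
      show "bdd_above (sum (\<lambda>u. t u powr p) ` {F. F \<subseteq> U \<and> finite F})"
        using bound by (intro bdd_aboveI[of _ M]) auto
    qed simp
  qed
  have gsum: "g summable_on U"
  proof -
    have "(\<lambda>v. L * c v) summable_on U" using c_sum by (rule summable_on_cmult_right)
    then show ?thesis using gL g_nn by (rule summable_on_comparison_test) auto
  qed
  have g1: "(\<lambda>v. g v powr 1) summable_on U"
    using gsum by (rule summable_on_cong[THEN iffD1, rotated]) (simp add: g_nn)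
  have tsum: "t summable_on U"
  proof -
    have "(\<lambda>u. t u powr 1) summable_on U" using dirA[of 1] g1 by simp
    then show ?thesis by (rule summable_on_cong[THEN iffD1, rotated]) (simp add: t_nn)
  qed
  have equiv: "(\<lambda>v. g v powr (1/\<tau>)) summable_on U \<longleftrightarrow> (\<lambda>v. t v powr (1/\<tau>)) summable_on U"
    if "\<tau> > 0" for \<tau>
  proof (cases "\<tau> \<ge> 1")
    case True
    then have "1/\<tau> \<le> 1" "1/\<tau> > 0" using that by auto
    then show ?thesis using dirA dirB by blast
  next
    case False
    then have "1/\<tau> \<ge> 1" using that by (simp add: field_simps)
    then show ?thesis using powr_ge1_summable gsum tsum g_nn t_nn by blast
  qed
  have Seq: "{\<tau>::real. \<tau> > 0 \<and> (\<lambda>v. t v powr (1 / \<tau>)) summable_on U}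
      = {\<tau>::real. \<tau> > 0 \<and> (\<lambda>v. g v powr (1 / \<tau>)) summable_on U}"
    using equiv by blast
  have eq: "decay t U = decay g U" unfolding decay_def Seq ..
  have one: "(1::real) \<in> {\<tau>::real. \<tau> > 0 \<and> (\<lambda>v. g v powr (1 / \<tau>)) summable_on U}"
    using g1 by simp
  have ge: "decay g U \<ge> 1"
  proof -
    let ?S = "{\<tau>::real. \<tau> > 0 \<and> (\<lambda>v. g v powr (1 / \<tau>)) summable_on U}"
    have ne: "?S \<noteq> {}" using one by blast
    have "ereal 1 \<le> Sup (ereal ` ?S)" using one by (intro Sup_upper) auto
    then show ?thesis using ne by (simp add: decay_def Let_def one_ereal_def)
  qed
  show ?thesis using eq ge by (simp add: t_def g_def U_def)
qed

end
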